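(* There exist unit vectors $\psi_1, \psi_2, \psi_3, \psi_4 \in \mathbb{C}^4$ such that $|\langle \psi_i, \psi_j\rangle| \le \tfrac{2}{3}$ for all $i \ne j$, and yet the set $\{\psi_1\psi_1^*, \psi_2\psi_2^*, \psi_3\psi_3^*, \psi_4\psi_4^*\}$ of rank-one density matrices is not antidistinguishable. Consequently, the statement "for every $d\ge 2$, any $d$ unit vectors in $\mathbb{C}^d$ with pairwise inner products of absolute value at most $(d-2)/(d-1)$ form an antidistinguishable set" is false (it fails for $d=4$).
   Context: A density matrix on $\mathbb{C}^d$ is a positive semidefinite $d\times d$ complex matrix of trace $1$. A set of density matrices $\{\rho_1,\ldots,\rho_n\}$ on $\mathbb{C}^d$ is called antidistinguishable if there exist positive semidefinite $d\times d$ matrices $N_1,\ldots,N_n$ with $\sum_{i=1}^n N_i = I$ (the identity) and $\operatorname{Tr}(N_i \rho_i) = 0$ for every $i \in \{1,\ldots,n\}$. For a unit vector $\psi$, $\psi\psi^*$ denotes the rank-one projection onto $\psi$, and $\langle \cdot,\cdot\rangle$ is the standard inner product on $\mathbb{C}^4$. *)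

theory Defs
  imports "HOL-Analysis.Analysis"
begin

definition cinner :: "complex^'d \<Rightarrow> complex^'d \<Rightarrow> complex" where
  "cinner x y = (\<Sum>i\<in>UNIV. x$i * cnj (y$i))"

definition cadjoint :: "complex^'d^'d \<Rightarrow> complex^'d^'d" where
  "cadjoint A = (\<chi> i j. cnj (A$j$i))"

definition ctrace :: "complex^'d^'d \<Rightarrow> complex" where
  "ctrace A = (\<Sum>i\<in>UNIV. A$i$i)"

definition psd :: "complex^'d^'d \<Rightarrow> bool" where
  "psd A \<longleftrightarrow> cadjoint A = A \<and> (\<forall>v. 0 \<le> Re (cinner (A *v v) v))"

definition density_matrix :: "complex^'d^'d \<Rightarrow> bool" where
  "density_matrix \<rho> \<longleftrightarrow> psd \<rho> \<and> ctrace \<rho> = 1"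

definition proj :: "complex^'d \<Rightarrow> complex^'d^'d" where
  "proj \<psi> = (\<chi> i j. \<psi>$i * cnj (\<psi>$j))"

definition antidistinguishable :: "nat \<Rightarrow> (nat \<Rightarrow> complex^'d^'d) \<Rightarrow> bool" where
  "antidistinguishable n \<rho> \<longleftrightarrow>
     (\<exists>N :: nat \<Rightarrow> complex^'d^'d.
        (\<forall>i\<in>{1..n}. psd (N i)) \<and>
        (\<Sum>i=1..n. N i) = mat 1 \<and>
        (\<forall>i\<in>{1..n}. ctrace (N i ** \<rho> i) = 0))"

end

theory Submission
  imports Defs
begin

definition mk4 :: "'a \<Rightarrow> 'a \<Rightarrow> 'a \<Rightarrow> 'a \<Rightarrow> 'a^4" where
 "mk4 a b c d = (\<chi> k. if k = 1 then a else if k = 2 then b else if k = 3 then c else d)"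

lemma mk4_simps[simp]: "mk4 a b c d $ 1 = a" "mk4 a b c d $ 2 = b" "mk4 a b c d $ 3 = c" "mk4 a b c d $ 4 = d"
  by (simp_all add: mk4_def)

lemma tr_proj: "ctrace (N ** proj v) = cinner (N *v v) v"
  unfolding ctrace_def proj_def cinner_def matrix_matrix_mult_def matrix_vector_mult_def
  by (simp add: sum_distrib_right mult.assoc)

lemma tr_add: "ctrace (N ** (A + B)) = ctrace (N ** A) + ctrace (N ** B)"
  unfolding ctrace_def matrix_matrix_mult_def by (simp add: distrib_left sum.distrib)

lemma tr_addr: "ctrace ((A + B) ** N) = ctrace (A ** N) + ctrace (B ** N)"
  unfolding ctrace_def matrix_matrix_mult_def by (simp add: distrib_right sum.distrib)

lemma tr_smult: "ctrace (N ** (r *\<^sub>R A)) = of_real r * ctrace (N ** A)"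
  unfolding ctrace_def matrix_matrix_mult_def
  by (simp add: sum_distrib_left algebra_simps del: scaleR_conv_of_real) (simp add: scaleR_conv_of_real)

lemma proj_quad: "cinner (proj v *v w) w = cnj (cinner v w) * cinner v w"
  unfolding cinner_def proj_def matrix_vector_mult_def
  apply (simp add: sum_distrib_left sum_distrib_right mult_ac)
  apply (rule sum.swap)
  done

lemma proj_psd: "psd (proj v)"
proof -
  have "cadjoint (proj v) = proj v"
    unfolding cadjoint_def proj_def by (simp add: vec_eq_iff mult.commute)
  moreover have "0 \<le> Re (cinner (proj v *v w) w)" for w
    unfolding proj_quad by (simp add: mult.commute[of "cnj _"] complex_mult_cnj)
  ultimately show ?thesis unfolding psd_def by blast
qed

lemma proj_density: assumes "norm v = 1" shows "density_matrix (proj v)"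
proof -
  have h: "(\<Sum>i\<in>UNIV. (norm (v$i))\<^sup>2) = 1"
    using assms unfolding norm_vec_def L2_set_def
    by (metis real_sqrt_eq_1_iff)
  have "ctrace (proj v) = (\<Sum>i\<in>UNIV. complex_of_real ((norm (v$i))\<^sup>2))"
    unfolding ctrace_def proj_def by (simp only: vec_lambda_beta complex_norm_square)
  also have "\<dots> = complex_of_real (\<Sum>i\<in>UNIV. (norm (v$i))\<^sup>2)"
    by (simp only: of_real_sum)
  finally have "ctrace (proj v) = 1" using h by simp
  then show ?thesis using proj_psd unfolding density_matrix_def by blast
qed

lemma cmod_le: assumes "(Re z)\<^sup>2 + (Im z)\<^sup>2 \<le> 4/9" shows "cmod z \<le> 2/3"
proof -
  have "cmod z \<le> sqrt (4/9)" unfolding cmod_def using assms by (rule real_sqrt_le_mono)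
  moreover have "sqrt (4/9) = (2/3::real)" by (rule real_sqrt_unique) (simp_all add: power2_eq_square)
  ultimately show ?thesis by simp
qed

definition Ym :: "complex^4^4" where
  "Ym = (\<chi> a b. if a = b then mk4 (22/729) 0 (-7/729) (-14/729) $ a else 0)"

definition psi :: "nat \<Rightarrow> complex^4" where
  "psi j = (if j = 1 then mk4 (22/27) 0 (-7/27) (-14/27*\<i>)
       else if j = 2 then mk4 (22/27) 0 (7/27) (-14/27)
       else if j = 3 then mk4 (22/27) 0 (-7/27) (14/27*\<i>)
       else mk4 (22/27) 0 (7/27) (14/27))"

definition l1 :: "nat \<Rightarrow> complex^4" where
  "l1 j = (if j = 1 then mk4 11 0 (-4) (-7*\<i>)
       else if j = 2 then mk4 11 0 4 (-7)
       else if j = 3 then mk4 11 0 (-4) (7*\<i>)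
       else mk4 11 0 4 7)"

definition l2 :: "nat \<Rightarrow> complex^4" where
  "l2 j = (if j = 1 then mk4 1 0 0 (-\<i>)
       else if j = 2 then mk4 1 0 0 (-1)
       else if j = 3 then mk4 1 0 0 \<i>
       else mk4 1 0 0 1)"

lemma decomp: "j \<in> {1..4} \<Longrightarrow>
  proj (psi j) = Ym + (7/1458) *\<^sub>R proj (l1 j) + (77/1458) *\<^sub>R proj (l2 j)"
proof -
  assume "j \<in> {1..4}"
  then have "j = 1 \<or> j = 2 \<or> j = 3 \<or> j = 4" by auto
  then show ?thesis
    unfolding vec_eq_iff forall_4
    by (elim disjE) (simp_all add: psi_def l1_def l2_def proj_def Ym_def complex_eq_iff del: scaleR_conv_of_real)
qed

lemma sum14: "(\<Sum>i=1..4::nat. f i) = f 1 + f 2 + f 3 + f 4"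
  by (simp add: eval_nat_numeral)

lemma trY: "ctrace Ym = 1/729" by (simp add: ctrace_def Ym_def sum_4)

lemma psi_norm: "j \<in> {1..4} \<Longrightarrow> norm (psi j) = 1"
proof -
  assume "j \<in> {1..4}"
  then have "j = 1 \<or> j = 2 \<or> j = 3 \<or> j = 4" by auto
  then show ?thesis
    unfolding norm_vec_def L2_set_def
    by (elim disjE) (simp_all add: psi_def sum_4 cmod_power2 power_divide)
qed

lemma psi_overlap: "i \<in> {1..4} \<Longrightarrow> j \<in> {1..4} \<Longrightarrow> i \<noteq> j \<Longrightarrow> cmod (cinner (psi i) (psi j)) \<le> 2/3"
proof -
  assume "i \<in> {1..4}" "j \<in> {1..4}" "i \<noteq> j"
  then have "(i = 1 \<or> i = 2 \<or> i = 3 \<or> i = 4) \<and> (j = 1 \<or> j = 2 \<or> j = 3 \<or> j = 4) \<and> i \<noteq> j" by auto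
  then show ?thesis
    apply -
    apply (rule cmod_le)
    apply (elim conjE disjE)
    apply (simp_all add: psi_def cinner_def sum_4 power2_eq_square)
    done
qed

theorem mainTheorem2:
  shows "\<exists>\<psi> :: nat \<Rightarrow> complex^4.
           (\<forall>i\<in>{1..4}. norm (\<psi> i) = 1) \<and>
           (\<forall>i\<in>{1..4}. \<forall>j\<in>{1..4}. i \<noteq> j \<longrightarrow> cmod (cinner (\<psi> i) (\<psi> j)) \<le> 2/3) \<and>
           (\<forall>i\<in>{1..4}. density_matrix (proj (\<psi> i))) \<and>
           \<not> antidistinguishable 4 (\<lambda>i. proj (\<psi> i))"
proof (intro exI conjI ballI impI)
  show "norm (psi i) = 1" if "i \<in> {1..4}" for i using psi_norm that .
  show "cmod (cinner (psi i) (psi j)) \<le> 2/3" if "i \<in> {1..4}" "j \<in> {1..4}" "i \<noteq> j" for i j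
    using psi_overlap that by blast
  show "density_matrix (proj (psi i))" if "i \<in> {1..4}" for i
    using proj_density psi_norm that by blast
  show "\<not> antidistinguishable 4 (\<lambda>i. proj (psi i))"
  proof
    assume "antidistinguishable 4 (\<lambda>i. proj (psi i))"
    then obtain N :: "nat \<Rightarrow> complex^4^4" where
      P: "\<forall>i\<in>{1..4}. psd (N i)" and S: "(\<Sum>i=1..4. N i) = mat 1"
      and T: "\<forall>i\<in>{1..4}. ctrace (N i ** proj (psi i)) = 0"
      unfolding antidistinguishable_def by blast
    have neg: "Re (ctrace (N i ** Ym)) \<le> 0" if i: "i \<in> {1..4}" for i
    proof -
      have "0 = ctrace (N i ** proj (psi i))" using T i by simp
      also have "\<dots> = ctrace (N i ** Ym) + of_real (7/1458) * cinner (N i *v l1 i) (l1 i)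
                 + of_real (77/1458) * cinner (N i *v l2 i) (l2 i)"
        unfolding decomp[OF i] tr_add tr_smult tr_proj ..
      finally have "Re 0 = Re (ctrace (N i ** Ym) + of_real (7/1458) * cinner (N i *v l1 i) (l1 i)
                 + of_real (77/1458) * cinner (N i *v l2 i) (l2 i))" by (rule arg_cong)
      then have "0 = Re (ctrace (N i ** Ym)) + (7/1458) * Re (cinner (N i *v l1 i) (l1 i))
                 + (77/1458) * Re (cinner (N i *v l2 i) (l2 i))"
        by simp
      moreover have "0 \<le> Re (cinner (N i *v l1 i) (l1 i))" "0 \<le> Re (cinner (N i *v l2 i) (l2 i))"
        using P i unfolding psd_def by auto
      ultimately show ?thesis by linarith
    qed
    have "ctrace Ym = ctrace (mat 1 ** Ym)" by simp
    also have "\<dots> = ctrace (N 1 ** Ym) + ctrace (N 2 ** Ym) + ctrace (N 3 ** Ym) + ctrace (N 4 ** Ym)"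
      unfolding S[symmetric] sum14 tr_addr ..
    finally have "Re (ctrace Ym) \<le> 0"
      using neg[of 1] neg[of 2] neg[of 3] neg[of 4] by simp
    then show False by (simp add: trY)
  qed
qed

end
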